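(* Let $\gamma \in (\tfrac12, 1)$, $\mu_1,\mu_2 \in \mathbb{R}$, $\sigma_1,\sigma_2>0$, $\beta>0$, $\rho \in (\tfrac12,1)$ and $\Delta p \in \mathbb{R}$. Let $(X,Y)$ be a random pair with $P(Y=+1)=\gamma$, $P(Y=-1)=1-\gamma$, and conditional distributions $X \mid Y=-1 \sim \mathcal{N}(\mu_1,\sigma_1^2)$, $X \mid Y=+1 \sim \mathcal{N}(\mu_2,\sigma_2^2)$. Define the confidence score $$s(x) = \frac{1}{1+\exp\!\left(-\beta\left((x-\Delta p) - \frac{\mu_1+\mu_2}{2}\right)\right)},$$ and the pseudo-label $Y_{psl}$ by: $Y_{psl}=+1$ if $s(X)>\rho$, $Y_{psl}=-1$ if $s(X)<1-\rho$, and $Y_{psl}=0$ if $1-\rho \le s(X) \le \rho$. Then, with $\Phi$ the cumulative distribution function of the standard normal distribution, $$P(Y_{psl}=1) = \gamma\, \Phi\!\left(\frac{\frac{\mu_2-\mu_1}{2} - \frac{1}{\beta}\log\frac{\rho}{1-\rho} - \Delta p}{\sigma_2}\right) + (1-\gamma)\, \Phi\!\left(\frac{\frac{\mu_1-\mu_2}{2} - \frac{1}{\beta}\log\frac{\rho}{1-\rho} - \Delta p}{\sigma_1}\right),$$ $$P(Y_{psl}=-1) = (1-\gamma)\, \Phi\!\left(\frac{\frac{\mu_2-\mu_1}{2} - \frac{1}{\beta}\log\frac{\rho}{1-\rho} + \Delta p}{\sigma_1}\right) + \gamma\, \Phi\!\left(\frac{\frac{\mu_1-\mu_2}{2} - \frac{1}{\beta}\log\frac{\rho}{1-\rho}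 + \Delta p}{\sigma_2}\right),$$ $$P(Y_{psl}=0) = 1 - P(Y_{psl}=1) - P(Y_{psl}=-1).$$
   Context: This models pseudo-labeling in a binary semi-supervised classification problem: $\gamma$ is the proportion of the positive class in the unlabeled data, $\Delta p$ is a logit-adjustment amount, $\beta$ reflects the sharpness (confidence) of the classifier, and $\rho$ is a fixed confidence threshold; a pseudo-label of $0$ means the sample is masked (no pseudo-label assigned). *)

theory Defs
  imports "HOL-Probability.Probability"
begin

definition std_normal_cdf :: "real \<Rightarrow> real" where
  "std_normal_cdf x = measure (density lborel std_normal_density) {..x}"

(* Normal distribution N(mu, sigma^2) as a measure on the reals (sigma is the std. deviation) *)
definition normal_measure :: "real \<Rightarrow> real \<Rightarrow> real measure" where
  "normal_measure mu sd = density lborel (normal_density mu sd)"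

definition conf_score :: "real \<Rightarrow> real \<Rightarrow> real \<Rightarrow> real \<Rightarrow> real \<Rightarrow> real" where
  "conf_score \<beta> \<Delta>p \<mu>1 \<mu>2 x = 1 / (1 + exp (- \<beta> * ((x - \<Delta>p) - (\<mu>1 + \<mu>2) / 2)))"

definition pseudo_label :: "real \<Rightarrow> real \<Rightarrow> real \<Rightarrow> real \<Rightarrow> real \<Rightarrow> real \<Rightarrow> int" where
  "pseudo_label \<beta> \<Delta>p \<mu>1 \<mu>2 \<rho> x =
     (if conf_score \<beta> \<Delta>p \<mu>1 \<mu>2 x > \<rho> then 1
      else if conf_score \<beta> \<Delta>p \<mu>1 \<mu>2 x < 1 - \<rho> then -1
      else 0)"

end

theory Submission
  imports Defs
begin
lemma std_pt: "measure (density lborel std_normal_density) {c} = 0"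
proof -
  have "{c} \<in> null_sets lborel" by (rule finite_imp_null_set_lborel) simp
  moreover have "absolutely_continuous lborel (density lborel std_normal_density)"
    by (rule absolutely_continuousI_density) simp
  ultimately have "{c} \<in> null_sets (density lborel std_normal_density)"
    unfolding absolutely_continuous_def by blast
  thus ?thesis by (simp add: measure_def null_setsD1)
qed

lemma std_lt: "measure (density lborel std_normal_density) {..<c} = std_normal_cdf c"
proof -
  interpret prob_space "density lborel std_normal_density" using prob_space_normal_density[of 1 0] by simp
  have "{..c} = {..<c} \<union> {c}" by auto
  moreover have "measure (density lborel std_normal_density) ({..<c} \<union> {c}) = measure (density lborel std_normal_density) {..<c} + measure (density lborel std_normal_density) {c}"
    by (rule finite_measure_Union) auto
  ultimately have "measure (density lborel std_normal_density) {..c} = measure (density lborel std_normal_density) {..<c} + measure (density lborel std_normal_density) {c}"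
    by simp
  thus ?thesis by (simp add: std_normal_cdf_def std_pt)
qed

lemma nm_distr:
  assumes "\<sigma> > 0" "\<bar>a\<bar> = \<sigma>"
  shows "normal_measure \<mu> \<sigma> = distr (density lborel std_normal_density) lborel (\<lambda>x. \<mu> + a * x)"
proof -
  interpret prob_space "density lborel std_normal_density" using prob_space_normal_density[of 1 0] by simp
  have d: "distributed (density lborel std_normal_density) lborel (\<lambda>x. x) std_normal_density"
    unfolding distributed_def by (simp add: distr_id2)
  have "a \<noteq> 0" using assms by auto
  from normal_density_affine[OF d _ this, of \<mu>] assms
  show ?thesis by (simp add: distributed_def normal_measure_def)
qed

lemma nm_gt:
  assumes "\<sigma> > 0"
  shows "measure (normal_measure \<mu> \<sigma>) {t<..} = std_normal_cdf ((\<mu> - t) / \<sigma>)"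
proof -
  have "measure (normal_measure \<mu> \<sigma>) {t<..} = measure (density lborel std_normal_density) ((\<lambda>x. \<mu> + (-\<sigma>) * x) -` {t<..})"
    using assms by (simp add: nm_distr[of \<sigma> "-\<sigma>"] measure_distr)
  also have "(\<lambda>x. \<mu> + (-\<sigma>) * x) -` {t<..} = {..<(\<mu> - t) / \<sigma>}"
    using assms by (auto simp: field_simps)
  finally show ?thesis by (simp add: std_lt)
qed

lemma nm_lt:
  assumes "\<sigma> > 0"
  shows "measure (normal_measure \<mu> \<sigma>) {..<t} = std_normal_cdf ((t - \<mu>) / \<sigma>)"
proof -
  have "measure (normal_measure \<mu> \<sigma>) {..<t} = measure (density lborel std_normal_density) ((\<lambda>x. \<mu> + \<sigma> * x) -` {..<t})"
    using assms by (simp add: nm_distr[of \<sigma> "\<sigma>"] measure_distr)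
  also have "(\<lambda>x. \<mu> + \<sigma> * x) -` {..<t} = {..<(t - \<mu>) / \<sigma>}"
    using assms by (auto simp: field_simps)
  finally show ?thesis by (simp add: std_lt)
qed
lemma cs_gt:
  assumes "\<beta> > 0" "0 < \<rho>" "\<rho> < 1"
  shows "conf_score \<beta> \<Delta>p \<mu>1 \<mu>2 x > \<rho> \<longleftrightarrow> x > \<Delta>p + (\<mu>1 + \<mu>2) / 2 + ln (\<rho> / (1 - \<rho>)) / \<beta>"
proof -
  define z where "z = (x - \<Delta>p) - (\<mu>1 + \<mu>2) / 2"
  define e where "e = exp (- \<beta> * z)"
  have ep: "e > 0" unfolding e_def by simp
  have 1: "conf_score \<beta> \<Delta>p \<mu>1 \<mu>2 x > \<rho> \<longleftrightarrow> e < (1 - \<rho>) / \<rho>"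
    unfolding conf_score_def e_def[symmetric] z_def[symmetric] using ep assms
    by (simp add: field_simps)
  have pos: "(1 - \<rho>) / \<rho> > 0" using assms by simp
  have 2: "e < (1 - \<rho>) / \<rho> \<longleftrightarrow> - \<beta> * z < ln ((1 - \<rho>) / \<rho>)"
    unfolding e_def by (metis exp_less_cancel_iff exp_ln pos)
  have 3: "ln ((1 - \<rho>) / \<rho>) = - ln (\<rho> / (1 - \<rho>))"
    using assms by (simp add: ln_div)
  have 4: "- \<beta> * z < - ln (\<rho> / (1 - \<rho>)) \<longleftrightarrow> z > ln (\<rho> / (1 - \<rho>)) / \<beta>"
    using assms by (simp add: field_simps)
  show ?thesis using 1 2 3 4 unfolding z_def by linarith
qed

lemma cs_lt:
  assumes "\<beta> > 0" "0 < \<rho>" "\<rho> < 1"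
  shows "conf_score \<beta> \<Delta>p \<mu>1 \<mu>2 x < 1 - \<rho> \<longleftrightarrow> x < \<Delta>p + (\<mu>1 + \<mu>2) / 2 - ln (\<rho> / (1 - \<rho>)) / \<beta>"
proof -
  define z where "z = (x - \<Delta>p) - (\<mu>1 + \<mu>2) / 2"
  define e where "e = exp (- \<beta> * z)"
  have ep: "e > 0" unfolding e_def by simp
  have 1: "conf_score \<beta> \<Delta>p \<mu>1 \<mu>2 x < 1 - \<rho> \<longleftrightarrow> e > \<rho> / (1 - \<rho>)"
    unfolding conf_score_def e_def[symmetric] z_def[symmetric] using ep assms
    by (simp add: field_simps)
  have pos: "\<rho> / (1 - \<rho>) > 0" using assms by simp
  have 2: "e > \<rho> / (1 - \<rho>) \<longleftrightarrow> - \<beta> * z > ln (\<rho> / (1 - \<rho>))"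
    unfolding e_def by (metis exp_less_cancel_iff exp_ln pos)
  have 4: "- \<beta> * z > ln (\<rho> / (1 - \<rho>)) \<longleftrightarrow> z < - ln (\<rho> / (1 - \<rho>)) / \<beta>"
    using assms by (simp add: field_simps, linarith)
  show ?thesis using 1 2 4 unfolding z_def by linarith
qed

lemma split_Y:
  assumes "prob_space M" "Y \<in> measurable M (count_space UNIV)"
    and "measure M {w \<in> space M. Y w = (1::int)} + measure M {w \<in> space M. Y w = -1} = 1"
    and E: "E \<in> sets M"
  shows "measure M E = measure M {w \<in> E. Y w = 1} + measure M {w \<in> E. Y w = -1}"
proof -
  interpret prob_space M by fact
  note [measurable] = assms(2)
  define B1 where "B1 = {w \<in> space M. Y w = 1}"
  define B2 where "B2 = {w \<in> space M. Y w = -1}"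
  have B1: "B1 \<in> sets M" unfolding B1_def by measurable
  have B2: "B2 \<in> sets M" unfolding B2_def by measurable
  have "prob (B1 \<union> B2) = 1"
    using finite_measure_Union[OF B1 B2] assms(3) unfolding B1_def B2_def by fastforce
  hence C0: "prob (space M - (B1 \<union> B2)) = 0" using prob_compl B1 B2 by auto
  have EC: "E \<inter> (space M - (B1 \<union> B2)) \<in> sets M" using E B1 B2 by auto
  have "prob (E \<inter> (space M - (B1 \<union> B2))) \<le> prob (space M - (B1 \<union> B2))"
    by (rule finite_measure_mono) (use B1 B2 in auto)
  hence EC0: "prob (E \<inter> (space M - (B1 \<union> B2))) = 0" using C0 measure_nonneg[of M "E \<inter> (space M - (B1 \<union> B2))"] by linarith
  have E1: "{w \<in> E. Y w = 1} = E \<inter> B1" and E2: "{w \<in> E. Y w = -1} = E \<inter> B2"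
    using sets.sets_into_space[OF E] unfolding B1_def B2_def by auto
  have "E = ((E \<inter> B1) \<union> (E \<inter> B2)) \<union> (E \<inter> (space M - (B1 \<union> B2)))"
    using sets.sets_into_space[OF E] by auto
  hence "prob E = prob ((E \<inter> B1) \<union> (E \<inter> B2)) + prob (E \<inter> (space M - (B1 \<union> B2)))"
    by (metis finite_measure_Union EC E B1 B2 sets.Int sets.Un Int_Diff_Un inf_sup_aci(1) Diff_disjoint inf_assoc
          Int_Un_distrib inf_bot_right)
  also have "prob ((E \<inter> B1) \<union> (E \<inter> B2)) = prob (E \<inter> B1) + prob (E \<inter> B2)"
    by (rule finite_measure_Union) (use E B1 B2 in \<open>auto simp: B1_def B2_def\<close>)
  finally show ?thesis using EC0 E1 E2 by simp
qed

theorem theorem0p1: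
  fixes M :: "'a measure" and X :: "'a \<Rightarrow> real" and Y :: "'a \<Rightarrow> int"
    and \<gamma> \<mu>1 \<mu>2 \<sigma>1 \<sigma>2 \<beta> \<rho> \<Delta>p :: real
  assumes "prob_space M"
    and "\<gamma> \<in> {1/2<..<1}" and "\<sigma>1 > 0" and "\<sigma>2 > 0" and "\<beta> > 0" and "\<rho> \<in> {1/2<..<1}"
    and "X \<in> borel_measurable M" and "Y \<in> measurable M (count_space UNIV)"
    and "measure M {w \<in> space M. Y w = 1} = \<gamma>"
    and "measure M {w \<in> space M. Y w = -1} = 1 - \<gamma>"
    and "\<And>A. A \<in> sets borel \<Longrightarrow>
           measure M {w \<in> space M. X w \<in> A \<and> Y w = -1} / measure M {w \<in> space M. Y w = -1}
             = measure (normal_measure \<mu>1 \<sigma>1) A"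
    and "\<And>A. A \<in> sets borel \<Longrightarrow>
           measure M {w \<in> space M. X w \<in> A \<and> Y w = 1} / measure M {w \<in> space M. Y w = 1}
             = measure (normal_measure \<mu>2 \<sigma>2) A"
  defines "Ypsl \<equiv> \<lambda>w. pseudo_label \<beta> \<Delta>p \<mu>1 \<mu>2 \<rho> (X w)"
  shows "(measure M {w \<in> space M. Ypsl w = 1} =
           \<gamma> * std_normal_cdf (((\<mu>2 - \<mu>1) / 2 - (1 / \<beta>) * ln (\<rho> / (1 - \<rho>)) - \<Delta>p) / \<sigma>2)
           + (1 - \<gamma>) * std_normal_cdf (((\<mu>1 - \<mu>2) / 2 - (1 / \<beta>) * ln (\<rho> / (1 - \<rho>)) - \<Delta>p) / \<sigma>1)) \<and>
         (measure M {w \<in> space M. Ypsl w = -1} =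
           (1 - \<gamma>) * std_normal_cdf (((\<mu>2 - \<mu>1) / 2 - (1 / \<beta>) * ln (\<rho> / (1 - \<rho>)) + \<Delta>p) / \<sigma>1)
           + \<gamma> * std_normal_cdf (((\<mu>1 - \<mu>2) / 2 - (1 / \<beta>) * ln (\<rho> / (1 - \<rho>)) + \<Delta>p) / \<sigma>2)) \<and>
         (measure M {w \<in> space M. Ypsl w = 0} =
           1 - measure M {w \<in> space M. Ypsl w = 1} - measure M {w \<in> space M. Ypsl w = -1})"
proof -
  interpret prob_space M by fact
  note [measurable] = assms(7) assms(8)
  define L where "L = ln (\<rho> / (1 - \<rho>))"
  define t1 where "t1 = \<Delta>p + (\<mu>1 + \<mu>2) / 2 + L / \<beta>"
  define t2 where "t2 = \<Delta>p + (\<mu>1 + \<mu>2) / 2 - L / \<beta>"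
  have r: "0 < \<rho>" "\<rho> < 1" "1/2 < \<rho>" using assms(6) by auto
  have g: "0 < \<gamma>" "\<gamma> < 1" using assms(2) by auto
  have "\<rho> / (1 - \<rho>) > 1" using r by (simp add: field_simps)
  hence Lp: "L > 0" unfolding L_def by simp
  hence t12: "t2 < t1" unfolding t1_def t2_def using assms(5) by (simp add: field_simps)
  have P1: "\<And>w. Ypsl w = 1 \<longleftrightarrow> X w > t1"
    unfolding Ypsl_def pseudo_label_def t1_def L_def using cs_gt[OF assms(5) r(1,2)] by auto
  have P2: "\<And>w. Ypsl w = -1 \<longleftrightarrow> X w < t2"
    unfolding Ypsl_def pseudo_label_def t2_def L_def using cs_gt[OF assms(5) r(1,2)] cs_lt[OF assms(5) r(1,2)]
      t12 unfolding t1_def t2_def L_def by auto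
  have P0: "\<And>w. Ypsl w = 0 \<longleftrightarrow> \<not> X w > t1 \<and> \<not> X w < t2"
    unfolding Ypsl_def pseudo_label_def t2_def t1_def L_def using cs_gt[OF assms(5) r(1,2)] cs_lt[OF assms(5) r(1,2)]
    by auto
  have sumY: "measure M {w \<in> space M. Y w = (1::int)} + measure M {w \<in> space M. Y w = -1} = 1"
    using assms(9,10) by simp
  have key: "measure M {w \<in> space M. X w \<in> A} =
      \<gamma> * measure (normal_measure \<mu>2 \<sigma>2) A + (1 - \<gamma>) * measure (normal_measure \<mu>1 \<sigma>1) A"
    if A: "A \<in> sets borel" for A
  proof -
    have E: "{w \<in> space M. X w \<in> A} \<in> sets M" using A by measurable
    have e1: "{w \<in> {w \<in> space M. X w \<in> A}. Y w = 1} = {w \<in> space M. X w \<in> A \<and> Y w = 1}" by auto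
    have e2: "{w \<in> {w \<in> space M. X w \<in> A}. Y w = -1} = {w \<in> space M. X w \<in> A \<and> Y w = -1}" by auto
    have m1: "measure M {w \<in> space M. X w \<in> A \<and> Y w = 1} = \<gamma> * measure (normal_measure \<mu>2 \<sigma>2) A"
      using assms(12)[OF A] assms(9) g by (simp add: field_simps)
    have m2: "measure M {w \<in> space M. X w \<in> A \<and> Y w = -1} = (1 - \<gamma>) * measure (normal_measure \<mu>1 \<sigma>1) A"
      using assms(11)[OF A] assms(10) g by (simp add: field_simps)
    show ?thesis using split_Y[OF assms(1,8) sumY E] e1 e2 m1 m2 by simp
  qed
  have S1: "{w \<in> space M. Ypsl w = 1} = {w \<in> space M. X w \<in> {t1<..}}" using P1 by auto
  have S2: "{w \<in> space M. Ypsl w = -1} = {w \<in> space M. X w \<in> {..<t2}}" using P2 by auto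
  have S0: "{w \<in> space M. Ypsl w = 0} = space M - ({w \<in> space M. X w \<in> {t1<..}} \<union> {w \<in> space M. X w \<in> {..<t2}})"
    using P0 by auto
  have c1: "measure M {w \<in> space M. Ypsl w = 1} =
           \<gamma> * std_normal_cdf (((\<mu>2 - \<mu>1) / 2 - (1 / \<beta>) * ln (\<rho> / (1 - \<rho>)) - \<Delta>p) / \<sigma>2)
           + (1 - \<gamma>) * std_normal_cdf (((\<mu>1 - \<mu>2) / 2 - (1 / \<beta>) * ln (\<rho> / (1 - \<rho>)) - \<Delta>p) / \<sigma>1)"
  proof -
    have a: "(\<mu>2 - t1) = (\<mu>2 - \<mu>1) / 2 - (1 / \<beta>) * ln (\<rho> / (1 - \<rho>)) - \<Delta>p"
      "(\<mu>1 - t1) = (\<mu>1 - \<mu>2) / 2 - (1 / \<beta>) * ln (\<rho> / (1 - \<rho>)) - \<Delta>p"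
      unfolding t1_def L_def by (simp_all add: field_simps)
    show ?thesis unfolding S1 using key[of "{t1<..}"] nm_gt[OF assms(4), of \<mu>2 t1] nm_gt[OF assms(3), of \<mu>1 t1] a by simp
  qed
  have c2: "measure M {w \<in> space M. Ypsl w = -1} =
           (1 - \<gamma>) * std_normal_cdf (((\<mu>2 - \<mu>1) / 2 - (1 / \<beta>) * ln (\<rho> / (1 - \<rho>)) + \<Delta>p) / \<sigma>1)
           + \<gamma> * std_normal_cdf (((\<mu>1 - \<mu>2) / 2 - (1 / \<beta>) * ln (\<rho> / (1 - \<rho>)) + \<Delta>p) / \<sigma>2)"
  proof -
    have a: "(t2 - \<mu>1) = (\<mu>2 - \<mu>1) / 2 - (1 / \<beta>) * ln (\<rho> / (1 - \<rho>)) + \<Delta>p"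
      "(t2 - \<mu>2) = (\<mu>1 - \<mu>2) / 2 - (1 / \<beta>) * ln (\<rho> / (1 - \<rho>)) + \<Delta>p"
      unfolding t2_def L_def by (simp_all add: field_simps)
    show ?thesis unfolding S2 using key[of "{..<t2}"] nm_lt[OF assms(4), of \<mu>2 t2] nm_lt[OF assms(3), of \<mu>1 t2] a by simp
  qed
  have c0: "measure M {w \<in> space M. Ypsl w = 0} =
           1 - measure M {w \<in> space M. Ypsl w = 1} - measure M {w \<in> space M. Ypsl w = -1}"
  proof -
    have A1: "{w \<in> space M. X w \<in> {t1<..}} \<in> sets M" by measurable
    have A2: "{w \<in> space M. X w \<in> {..<t2}} \<in> sets M" by measurable
    have "prob ({w \<in> space M. X w \<in> {t1<..}} \<union> {w \<in> space M. X w \<in> {..<t2}}) =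
       prob {w \<in> space M. X w \<in> {t1<..}} + prob {w \<in> space M. X w \<in> {..<t2}}"
      by (rule finite_measure_Union[OF A1 A2]) (use t12 in auto)
    moreover have "prob (space M - ({w \<in> space M. X w \<in> {t1<..}} \<union> {w \<in> space M. X w \<in> {..<t2}})) =
       1 - prob ({w \<in> space M. X w \<in> {t1<..}} \<union> {w \<in> space M. X w \<in> {..<t2}})"
      by (rule prob_compl) (use A1 A2 in auto)
    ultimately show ?thesis unfolding S0 S1 S2 by simp
  qed
  show ?thesis using c0 c1 c2 by blast
qed

end
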